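(* Let $n\ge r\ge 1$ be integers and let $\overline{X}\in\mathcal{S}_{+}^{n,r}:=\mathbb{R}_{+}^{n\times r}\cap{\rm St}(n,r)$. Suppose that, in the case $n>r>1$, $\overline{X}$ has no zero rows. Define \[ \kappa:=\begin{cases}2.1\sqrt{n}&\text{if } n=r,\\ 1&\text{if } n>r=1,\\ \dfrac{2.1\sqrt{r}\,[1+3r(n-r)]}{\overline{X}_{i^*j^*}}&\text{if } n>r>1,\end{cases} \] where $\overline{X}_{i^*j^*}$ is the smallest nonzero entry of $\overline{X}$. Then there exists $\delta>0$ such that for all $X\in\mathbb{R}^{n\times r}$ with $\|X-\overline{X}\|_F\le\delta$, \[ {\rm dist}(X,\mathcal{S}_{+}^{n,r})\le(\kappa+1)\big[{\rm dist}(X,\mathbb{R}_{+}^{n\times r})+{\rm dist}(X,{\rm St}(n,r))\big]. \]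
   Context: ${\rm St}(n,r):=\{X\in\mathbb{R}^{n\times r}: X^\top X=I_r\}$ is the Stiefel manifold, $\mathbb{R}_{+}^{n\times r}$ is the cone of entrywise nonnegative $n\times r$ matrices, and $\mathcal{S}_{+}^{n,r}:=\mathbb{R}_{+}^{n\times r}\cap{\rm St}(n,r)$. For a closed set $\Omega\subset\mathbb{R}^{n\times r}$, ${\rm dist}(X,\Omega)=\inf_{Z\in\Omega}\|X-Z\|_F$, with $\|\cdot\|_F$ the Frobenius norm. *)

theory Defs
  imports "HOL-Analysis.Analysis"
begin

text \<open>n x r real matrices are represented as real^'r^'n (rows indexed by 'n,
  columns by 'r); n = CARD('n), r = CARD('r). The norm on this type is the
  Frobenius norm, and infdist is the distance to a set.\<close>

definition stiefel :: "(real^'r^'n) set" where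
  "stiefel = {X. transpose X ** X = mat 1}"

definition nonneg_mats :: "(real^'r^'n) set" where
  "nonneg_mats = {X. \<forall>i j. X $ i $ j \<ge> 0}"

definition nonneg_stiefel :: "(real^'r^'n) set" where
  "nonneg_stiefel = nonneg_mats \<inter> stiefel"

definition no_zero_rows :: "real^'r^'n \<Rightarrow> bool" where
  "no_zero_rows X \<longleftrightarrow> (\<forall>i. \<exists>j. X $ i $ j \<noteq> 0)"

definition min_nonzero_entry :: "real^'r^'n \<Rightarrow> real" where
  "min_nonzero_entry X = Min {X $ i $ j | i j. X $ i $ j \<noteq> 0}"

definition kappa :: "real^'r^'n \<Rightarrow> real" where
  "kappa X =
    (let n = real CARD('n); r = real CARD('r) in
     if CARD('n) = CARD('r) then 2.1 * sqrt n
     else if CARD('r) = 1 then 1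
     else 2.1 * sqrt r * (1 + 3 * r * (n - r)) / min_nonzero_entry X)"

end

theory Submission
  imports Defs
begin
lemma normsq: "(norm (A::real^'r^'n))^2 = (\<Sum>i\<in>UNIV. \<Sum>j\<in>UNIV. (A$i$j)^2)"
  unfolding norm_vec_def L2_set_def
  by (simp add: sum_nonneg)

lemma norm_mono_entry:
  fixes A B :: "real^'r^'n"
  assumes "\<And>i j. \<bar>A$i$j\<bar> \<le> \<bar>B$i$j\<bar>"
  shows "norm A \<le> norm B"
proof -
  have "(A$i$j)^2 \<le> (B$i$j)^2" for i j
    using assms[of i j] by (simp add: abs_le_square_iff)
  then have "(norm A)^2 \<le> (norm B)^2"
    unfolding normsq by (intro sum_mono) auto
  thus ?thesis by (simp add: power2_le_iff_abs_le)
qed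

lemma entry_le_norm: "\<bar>(A::real^'r^'n)$i$j\<bar> \<le> norm A"
proof -
  have "(A$i$j)^2 \<le> (\<Sum>j'\<in>UNIV. (A$i$j')^2)"
    by (rule member_le_sum) auto
  also have "\<dots> \<le> (\<Sum>i'\<in>UNIV. \<Sum>j'\<in>UNIV. (A$i'$j')^2)"
    by (rule member_le_sum[where f="\<lambda>i'. \<Sum>j'\<in>UNIV. (A$i'$j')^2"]) (auto intro: sum_nonneg)
  finally have "(A$i$j)^2 \<le> (norm A)^2" by (simp add: normsq)
  thus ?thesis by (simp add: power2_le_iff_abs_le)
qed

lemma stiefel_iff:
  "(Y::real^'r^'n) \<in> stiefel \<longleftrightarrow> (\<forall>j l. (\<Sum>i\<in>UNIV. Y$i$j * Y$i$l) = (if j = l then 1 else 0))"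
  unfolding stiefel_def
  by (simp add: vec_eq_iff matrix_matrix_mult_def transpose_def mat_def)

lemma infdist_ge:
  assumes "A \<noteq> {}" "\<And>y. y \<in> A \<Longrightarrow> c \<le> dist x y"
  shows "c \<le> infdist x A"
  using assms by (simp add: infdist_notempty cINF_greatest)

definition negm :: "real^'r^'n \<Rightarrow> real^'r^'n" where
  "negm X = (\<chi> i j. max (-(X$i$j)) 0)"

lemma negm_le_infdist: "norm (negm (X::real^'r^'n)) \<le> infdist X nonneg_mats"
proof (rule infdist_ge)
  have "0 \<in> (nonneg_mats::(real^'r^'n) set)" unfolding nonneg_mats_def by simp
  then show "(nonneg_mats::(real^'r^'n) set) \<noteq> {}" by blast
  fix W :: "real^'r^'n" assume "W \<in> nonneg_mats"
  then have "\<And>i j. W$i$j \<ge> 0" unfolding nonneg_mats_def by auto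
  then have "\<And>i j. \<bar>negm X $i$j\<bar> \<le> \<bar>(X - W)$i$j\<bar>"
    by (simp add: negm_def) (smt (verit))
  then show "norm (negm X) \<le> dist X W"
    unfolding dist_norm by (rule norm_mono_entry)
qed

lemma negm_lip: "norm (negm (Y::real^'r^'n)) \<le> norm (negm X) + norm (X - Y)"
proof -
  have "\<And>i j. \<bar>(negm Y - negm X)$i$j\<bar> \<le> \<bar>(X - Y)$i$j\<bar>"
    by (simp add: negm_def)
  then have "norm (negm Y - negm X) \<le> norm (X - Y)"
    by (rule norm_mono_entry)
  moreover have "norm (negm Y) \<le> norm (negm X) + norm (negm Y - negm X)"
    by (metis add_diff_cancel_left' norm_triangle_ineq diff_add_cancel add.commute)
  ultimately show ?thesis by linarith
qed
lemma key:
  fixes Xb Y :: "real^'r^'n" and k :: "'n \<Rightarrow> 'r" and lo \<rho> :: real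
  assumes own: "\<And>i j. Xb$i$j \<noteq> 0 \<longleftrightarrow> k i = j"
    and nn: "\<And>i j. Xb$i$j \<ge> 0"
    and sk: "surj k"
    and lo: "\<And>i. lo \<le> Xb$i$(k i)"
    and rho: "0 < \<rho>" "\<rho> \<le> lo/2" "\<rho> \<le> 1/4"
    and Y: "Y \<in> stiefel" and cl: "norm (Y - Xb) \<le> \<rho>"
  shows "\<exists>Z\<in>nonneg_stiefel. norm (Y - Z) \<le> (1+2*\<rho>) * sqrt (2*(real CARD('n) - 1 + (real CARD('r) - 1)*(real CARD('n) - real CARD('r) + 1))/(lo-\<rho>)^2 + 1) * norm (negm Y)"
proof -
  define rn where "rn = real CARD('n)"
  define rr where "rr = real CARD('r)"
  define B where "B = rn - 1 + (rr - 1)*(rn - rr + 1)"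
  define c where "c = lo - \<rho>"
  have c0: "c > 0" "c \<ge> \<rho>" using rho unfolding c_def by auto
  define P where "P i j = max (Y$i$j) 0" for i j
  define M where "M i j = max (-(Y$i$j)) 0" for i j
  define m where "m j = sqrt (\<Sum>i\<in>UNIV. (M i j)^2)" for j
  have P0: "P i j \<ge> 0" "M i j \<ge> 0" for i j unfolding P_def M_def by auto
  have msq: "(m j)^2 = (\<Sum>i\<in>UNIV. (M i j)^2)" for j
    unfolding m_def by (simp add: sum_nonneg)
  have m0: "m j \<ge> 0" for j unfolding m_def by (simp add: sum_nonneg)
  have s2: "(norm (negm Y))^2 = (\<Sum>j\<in>UNIV. (m j)^2)"
    unfolding normsq msq negm_def M_def by (subst sum.swap) simp
  have ent: "\<bar>Y$i$j - Xb$i$j\<bar> \<le> \<rho>" for i j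
    using entry_le_norm[of "Y - Xb" i j] cl by simp
  have Yk: "Y$i$(k i) \<ge> c" for i
    using ent[of i "k i"] lo[of i] unfolding c_def by linarith
  have unit: "(\<Sum>i\<in>UNIV. (Y$i$j)^2) = 1" for j
    using Y unfolding stiefel_iff by (auto simp: power2_eq_square)
  have orth: "(\<Sum>i\<in>UNIV. Y$i$j * Y$i$l) = 0" if "j \<noteq> l" for j l
    using Y that unfolding stiefel_iff by auto
  have claimA: "(\<Sum>i\<in>UNIV. P i j * P i l) \<le> m j + m l" if "j \<noteq> l" for j l
  proof -
    have pw: "P i j * P i l \<le> Y$i$j * Y$i$l + \<bar>Y$i$j\<bar> * \<bar>M i l\<bar> + \<bar>M i j\<bar> * \<bar>Y$i$l\<bar>" for i
      unfolding P_def M_def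
      by (cases "Y$i$j \<ge> 0"; cases "Y$i$l \<ge> 0") (auto simp: mult_nonneg_nonneg mult_nonpos_nonpos mult_nonneg_nonpos mult_nonpos_nonneg)
    have "(\<Sum>i\<in>UNIV. P i j * P i l) \<le> (\<Sum>i\<in>UNIV. Y$i$j * Y$i$l + \<bar>Y$i$j\<bar> * \<bar>M i l\<bar> + \<bar>M i j\<bar> * \<bar>Y$i$l\<bar>)"
      by (rule sum_mono) (rule pw)
    also have "\<dots> = (\<Sum>i\<in>UNIV. \<bar>Y$i$j\<bar> * \<bar>M i l\<bar>) + (\<Sum>i\<in>UNIV. \<bar>M i j\<bar> * \<bar>Y$i$l\<bar>)"
      using orth[OF that] by (simp add: sum.distrib)
    also have "\<dots> \<le> L2_set (\<lambda>i. Y$i$j) UNIV * L2_set (\<lambda>i. M i l) UNIV + L2_set (\<lambda>i. M i j) UNIV * L2_set (\<lambda>i. Y$i$l) UNIV"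
      by (intro add_mono L2_set_mult_ineq)
    also have "\<dots> = m l + m j"
      unfolding L2_set_def m_def using unit by simp
    finally show ?thesis by simp
  qed
  have claimB: "(P i j)^2 \<le> 2*((m j)^2 + (m (k i))^2)/c^2" if "k i \<noteq> j" for i j
  proof -
    have "P i j * P i (k i) \<le> (\<Sum>i'\<in>UNIV. P i' j * P i' (k i))"
      by (rule member_le_sum) (auto intro: mult_nonneg_nonneg P0)
    also have "\<dots> \<le> m j + m (k i)" using claimA that by auto
    finally have 1: "P i j * P i (k i) \<le> m j + m (k i)" .
    have "P i (k i) = Y$i$(k i)" using Yk[of i] c0 unfolding P_def by auto
    then have "P i j * c \<le> m j + m (k i)"
      using 1 Yk[of i] P0[of i j] by (smt (verit) mult_left_mono)
    then have 2: "P i j \<le> (m j + m (k i))/c" using c0 by (simp add: field_simps)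
    have "(P i j)^2 \<le> ((m j + m (k i))/c)^2"
      using 2 P0 by (intro power_mono) auto
    also have "\<dots> = (m j + m (k i))^2/c^2" by (simp add: power_divide)
    also have "\<dots> \<le> 2*((m j)^2 + (m (k i))^2)/c^2"
    proof (rule divide_right_mono)
      show "(m j + m (k i))^2 \<le> 2*((m j)^2 + (m (k i))^2)"
        using zero_le_power2[of "m j - m (k i)"] by (simp add: power2_eq_square algebra_simps)
    qed simp
    finally show ?thesis .
  qed
  define cnt where "cnt j = (\<Sum>i\<in>UNIV. if k i = j then 1 else (0::real))" for j
  have cnt1: "cnt j \<ge> 1" for j
  proof -
    obtain i where "k i = j" using sk by (metis surjD)
    then have "(if k i = j then 1 else (0::real)) \<le> cnt j"
      unfolding cnt_def by (intro member_le_sum) auto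
    with \<open>k i = j\<close> show ?thesis by simp
  qed
  have cntsum: "(\<Sum>j\<in>UNIV. cnt j) = rn"
    unfolding cnt_def rn_def by (subst sum.swap) simp
  have cntle: "cnt j \<le> rn - rr + 1" for j
  proof -
    have "(\<Sum>l\<in>UNIV. cnt l) = cnt j + (\<Sum>l\<in>UNIV - {j}. cnt l)"
      by (simp add: sum.remove)
    moreover have "(\<Sum>l\<in>UNIV - {j}. cnt l) \<ge> (\<Sum>l\<in>UNIV - {j}. 1)"
      by (rule sum_mono) (rule cnt1)
    moreover have "(\<Sum>l\<in>UNIV - {j}. (1::real)) = rr - 1"
      unfolding rr_def by (simp add: card_Diff_singleton)
    ultimately show ?thesis using cntsum by linarith
  qed
  have rr1: "rr \<ge> 1" unfolding rr_def by (simp add: Suc_le_eq)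
  have ind: "(\<Sum>j\<in>UNIV. if k i = j then (1::real) else 0) = 1" for i by simp
  have first: "(\<Sum>i\<in>UNIV. \<Sum>j\<in>UNIV. if k i = j then 0 else (m j)^2) = (\<Sum>j\<in>UNIV. (rn - cnt j) * (m j)^2)"
  proof -
    have "(\<Sum>i\<in>UNIV. \<Sum>j\<in>UNIV. if k i = j then 0 else (m j)^2) = (\<Sum>j\<in>UNIV. \<Sum>i\<in>UNIV. (1 - (if k i = j then 1 else 0)) * (m j)^2)"
      by (subst sum.swap) (intro sum.cong refl, auto)
    also have "\<dots> = (\<Sum>j\<in>UNIV. (rn - cnt j) * (m j)^2)"
      unfolding cnt_def rn_def by (simp add: sum_distrib_right[symmetric] sum_subtractf)
    finally show ?thesis .
  qed
  have second: "(\<Sum>i\<in>UNIV. \<Sum>j\<in>UNIV. if k i = j then 0 else (m (k i))^2) = (rr - 1) * (\<Sum>j\<in>UNIV. cnt j * (m j)^2)"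
  proof -
    have "(\<Sum>i\<in>UNIV. \<Sum>j\<in>UNIV. if k i = j then 0 else (m (k i))^2) = (\<Sum>i\<in>UNIV. (rr - 1) * (m (k i))^2)"
    proof (intro sum.cong refl)
      fix i
      have "(\<Sum>j\<in>UNIV. if k i = j then 0 else (m (k i))^2) = (\<Sum>j\<in>UNIV. (1 - (if k i = j then 1 else 0)) * (m (k i))^2)"
        by (intro sum.cong refl) auto
      also have "\<dots> = (rr - 1) * (m (k i))^2"
        unfolding rr_def by (simp add: sum_distrib_right[symmetric] sum_subtractf)
      finally show "(\<Sum>j\<in>UNIV. if k i = j then 0 else (m (k i))^2) = (rr - 1) * (m (k i))^2" .
    qed
    also have "\<dots> = (rr - 1) * (\<Sum>i\<in>UNIV. \<Sum>j\<in>UNIV. (if k i = j then 1 else 0) * (m j)^2)"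
    proof -
      have "(\<Sum>j\<in>UNIV. (if k i = j then 1 else 0) * (m j)^2) = (m (k i))^2" for i
      proof -
        have "(\<Sum>j\<in>UNIV. (if k i = j then 1 else 0) * (m j)^2) = (\<Sum>j\<in>UNIV. if k i = j then (m j)^2 else 0)"
          by (intro sum.cong) auto
        then show ?thesis by simp
      qed
      then show ?thesis by (simp add: sum_distrib_left)
    qed
    also have "\<dots> = (rr - 1) * (\<Sum>j\<in>UNIV. cnt j * (m j)^2)"
      unfolding cnt_def by (subst sum.swap) (simp add: sum_distrib_right)
    finally show ?thesis .
  qed
  have T: "(\<Sum>i\<in>UNIV. \<Sum>j\<in>UNIV. if k i = j then 0 else (m j)^2 + (m (k i))^2) \<le> B * (\<Sum>j\<in>UNIV. (m j)^2)"
  proof -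
    have "(\<Sum>i\<in>UNIV. \<Sum>j\<in>UNIV. if k i = j then 0 else (m j)^2 + (m (k i))^2)
        = (\<Sum>i\<in>UNIV. \<Sum>j\<in>UNIV. if k i = j then 0 else (m j)^2) + (\<Sum>i\<in>UNIV. \<Sum>j\<in>UNIV. if k i = j then 0 else (m (k i))^2)"
      by (simp add: sum.distrib[symmetric] if_distrib cong: if_cong)
    also have "\<dots> = (\<Sum>j\<in>UNIV. ((rn - cnt j) + (rr - 1) * cnt j) * (m j)^2)"
      unfolding first second by (simp add: sum_distrib_left sum.distrib[symmetric] algebra_simps)
    also have "\<dots> \<le> (\<Sum>j\<in>UNIV. B * (m j)^2)"
    proof (intro sum_mono mult_right_mono)
      fix j
      have "(rr - 1) * cnt j \<le> (rr - 1) * (rn - rr + 1)"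
        using cntle[of j] rr1 by (intro mult_left_mono) auto
      then show "(rn - cnt j) + (rr - 1) * cnt j \<le> B" unfolding B_def using cnt1[of j] by linarith
    qed auto
    finally show ?thesis by (simp add: sum_distrib_left)
  qed
  define D where "D i j = (if k i = j then P i j else 0)" for i j
  define Dm :: "real^'r^'n" where "Dm = (\<chi> i j. D i j)"
  have D0: "D i j \<ge> 0" for i j unfolding D_def using P0 by auto
  have YD: "(Y$i$j - D i j)^2 = (if k i = j then 0 else (P i j)^2) + (M i j)^2" for i j
    unfolding D_def P_def M_def by (auto simp: max_def power2_eq_square)
  have DY: "(D i j)^2 + (Y$i$j - D i j)^2 = (Y$i$j)^2" for i j
    unfolding D_def P_def by (auto simp: max_def power2_eq_square)
  define t2 where "t2 = (norm (Y - Dm))^2"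
  have ng: "(norm (negm Y))^2 = (\<Sum>i\<in>UNIV. \<Sum>j\<in>UNIV. (M i j)^2)"
    unfolding normsq negm_def M_def by simp
  have t2eq: "t2 = (\<Sum>i\<in>UNIV. \<Sum>j\<in>UNIV. if k i = j then 0 else (P i j)^2) + (norm (negm Y))^2"
    unfolding t2_def ng by (simp add: normsq Dm_def YD sum.distrib)
  have sumP: "(\<Sum>i\<in>UNIV. \<Sum>j\<in>UNIV. if k i = j then 0 else (P i j)^2) \<le> 2/c^2 * (B * (\<Sum>j\<in>UNIV. (m j)^2))"
  proof -
    have "(\<Sum>i\<in>UNIV. \<Sum>j\<in>UNIV. if k i = j then 0 else (P i j)^2)
        \<le> (\<Sum>i\<in>UNIV. \<Sum>j\<in>UNIV. 2/c^2 * (if k i = j then 0 else (m j)^2 + (m (k i))^2))"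
      using claimB by (intro sum_mono) (simp add: mult.commute)
    also have "\<dots> = 2/c^2 * (\<Sum>i\<in>UNIV. \<Sum>j\<in>UNIV. if k i = j then 0 else (m j)^2 + (m (k i))^2)"
      by (simp add: sum_distrib_left)
    also have "\<dots> \<le> 2/c^2 * (B * (\<Sum>j\<in>UNIV. (m j)^2))"
      using T c0 by (intro mult_left_mono) auto
    finally show ?thesis .
  qed
  have t2le: "t2 \<le> (2*B/c^2 + 1) * (norm (negm Y))^2"
    using sumP unfolding t2eq s2 by (simp add: algebra_simps)
  have "\<bar>(Xb - Dm)$i$j\<bar> \<le> \<bar>(Xb - Y)$i$j\<bar>" for i j
  proof (cases "k i = j")
    case True
    then show ?thesis using nn[of i j] unfolding Dm_def D_def P_def by auto
  next
    case False
    then have "Xb$i$j = 0" using own by blast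
    then show ?thesis using False unfolding Dm_def D_def by auto
  qed
  then have "norm (Xb - Dm) \<le> norm (Xb - Y)" by (rule norm_mono_entry)
  also have "\<dots> \<le> \<rho>" using cl by (simp add: norm_minus_commute)
  finally have XD: "norm (Xb - Dm) \<le> \<rho>" .
  have tsmall: "norm (Y - Dm) \<le> 2*\<rho>"
    using norm_triangle_ineq[of "Y - Xb" "Xb - Dm"] cl XD by simp
  have t20: "t2 \<ge> 0" unfolding t2_def by simp
  have t2small: "t2 \<le> 1/4"
  proof -
    have "t2 \<le> (2*\<rho>)^2" unfolding t2_def using tsmall by (intro power_mono) auto
    also have "\<dots> \<le> (1/2)^2" using rho by (intro power_mono) auto
    finally show ?thesis by (simp add: power2_eq_square)
  qed
  define q where "q j = (\<Sum>i\<in>UNIV. (Y$i$j - D i j)^2)" for j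
  define N where "N j = sqrt (\<Sum>i\<in>UNIV. (D i j)^2)" for j
  have Nsq: "(N j)^2 = (\<Sum>i\<in>UNIV. (D i j)^2)" for j
    unfolding N_def by (simp add: sum_nonneg)
  have Nq: "(N j)^2 + q j = 1" for j
    unfolding Nsq q_def unit[of j, symmetric] sum.distrib[symmetric] DY ..
  have qsum: "(\<Sum>j\<in>UNIV. q j) = t2"
    unfolding t2_def normsq q_def Dm_def by (subst sum.swap) simp
  have q0: "q j \<ge> 0" for j unfolding q_def by (simp add: sum_nonneg)
  have qle: "q j \<le> t2" for j
    unfolding qsum[symmetric] by (rule member_le_sum) (auto simp: q0)
  have N0: "N j \<ge> 0" for j unfolding N_def by (simp add: sum_nonneg)
  have Npos: "N j > 0" for j
  proof -
    have "(N j)^2 \<ge> 3/4" using Nq[of j] qle[of j] t2small by linarith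
    then have "N j \<noteq> 0" by auto
    with N0[of j] show ?thesis by simp
  qed
  have N1: "N j \<le> 1" for j
  proof -
    have "(N j)^2 \<le> 1^2" using Nq[of j] q0[of j] by simp
    then show ?thesis using N0[of j] by (metis abs_of_nonneg abs_square_le_1 power_one)
  qed
  define Z :: "real^'r^'n" where "Z = (\<chi> i j. D i j / N j)"
  have Zin: "Z \<in> nonneg_stiefel"
  proof -
    have "Z \<in> nonneg_mats" unfolding nonneg_mats_def Z_def using D0 N0 by simp
    moreover have "Z \<in> stiefel"
      unfolding stiefel_iff
    proof (intro allI)
      fix j l
      show "(\<Sum>i\<in>UNIV. Z$i$j * Z$i$l) = (if j = l then 1 else 0)"
      proof (cases "j = l")
        case True
        have "(\<Sum>i\<in>UNIV. Z$i$j * Z$i$l) = (\<Sum>i\<in>UNIV. (D i j)^2) / (N j)^2"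
          unfolding Z_def True by (simp add: sum_divide_distrib power2_eq_square)
        also have "\<dots> = 1" unfolding Nsq[symmetric] using Npos[of j] by simp
        finally show ?thesis using True by simp
      next
        case False
        have "D i j * D i l = 0" for i unfolding D_def using False by auto
        then have zz: "Z$i$j * Z$i$l = 0" for i unfolding Z_def by simp
        then show ?thesis using False by (simp add: sum.neutral)
      qed
    qed
    ultimately show ?thesis unfolding nonneg_stiefel_def by simp
  qed
  have DZ: "(norm (Dm - Z))^2 = (\<Sum>j\<in>UNIV. (N j - 1)^2)"
  proof -
    have "(norm (Dm - Z))^2 = (\<Sum>j\<in>UNIV. \<Sum>i\<in>UNIV. (D i j)^2 * (1 - 1 / N j)^2)"
      unfolding normsq Dm_def Z_def
      by (subst sum.swap) (simp add: power2_eq_square algebra_simps diff_divide_distrib)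
    also have "\<dots> = (\<Sum>j\<in>UNIV. (N j)^2 * (1 - 1 / N j)^2)"
      by (simp add: sum_distrib_right[symmetric] Nsq)
    also have "\<dots> = (\<Sum>j\<in>UNIV. (N j - 1)^2)"
    proof (intro sum.cong refl)
      fix j
      have "N j \<noteq> 0" using Npos[of j] by simp
      then show "(N j)^2 * (1 - 1 / N j)^2 = (N j - 1)^2"
        by (simp add: power2_eq_square field_simps)
    qed
    finally show ?thesis .
  qed
  have Nb: "(N j - 1)^2 \<le> q j * t2" for j
  proof -
    have "N j * N j \<le> N j * 1" using N0[of j] N1[of j] by (intro mult_left_mono) auto
    then have a: "1 - N j \<le> q j" using Nq[of j] by (simp add: power2_eq_square)
    have b: "0 \<le> 1 - N j" using N1[of j] by simp
    have "(N j - 1)^2 = (1 - N j)^2" by (simp add: power2_commute)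
    also have "\<dots> \<le> (q j)^2" using a b by (intro power_mono) auto
    also have "\<dots> \<le> q j * t2" using qle[of j] q0[of j] by (simp add: power2_eq_square mult_left_mono)
    finally show ?thesis .
  qed
  have "(norm (Dm - Z))^2 \<le> t2^2"
  proof -
    have "(norm (Dm - Z))^2 \<le> (\<Sum>j\<in>UNIV. q j * t2)" unfolding DZ by (intro sum_mono Nb)
    also have "\<dots> = t2^2" by (simp add: sum_distrib_right[symmetric] qsum power2_eq_square)
    finally show ?thesis .
  qed
  then have DZle: "norm (Dm - Z) \<le> t2" using t20 by (simp add: power2_le_iff_abs_le)
  define t where "t = norm (Y - Dm)"
  have t2t: "t2 = t^2" unfolding t2_def t_def ..
  have t0: "t \<ge> 0" unfolding t_def by simp
  have "norm (Y - Z) \<le> t + t2"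
    using norm_triangle_ineq[of "Y - Dm" "Dm - Z"] DZle unfolding t_def by simp
  also have "t2 \<le> 2*\<rho>*t" unfolding t2t power2_eq_square using tsmall t0 unfolding t_def[symmetric]
    by (intro mult_right_mono) auto
  finally have YZ: "norm (Y - Z) \<le> (1+2*\<rho>) * t" by (simp add: algebra_simps)
  have "t = sqrt t2" unfolding t2t using t0 by simp
  also have "\<dots> \<le> sqrt ((2*B/c^2 + 1) * (norm (negm Y))^2)" using t2le by simp
  also have "\<dots> = sqrt (2*B/c^2 + 1) * norm (negm Y)" by (simp add: real_sqrt_mult)
  finally have "t \<le> sqrt (2*B/c^2 + 1) * norm (negm Y)" .
  then have "norm (Y - Z) \<le> (1+2*\<rho>) * (sqrt (2*B/c^2 + 1) * norm (negm Y))"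
    using YZ rho by (smt (verit) mult_left_mono)
  then show ?thesis using Zin unfolding B_def rn_def rr_def c_def by (auto simp: mult.assoc)
qed
lemma sq_sqrt: "(Q::real) \<ge> 0 \<Longrightarrow> (a * sqrt Q)^2 = a^2 * Q"
  by (simp add: power_mult_distrib)

lemma const_eq:
  fixes x :: real assumes x: "x \<ge> 1"
  shows "(1+2*(1/100)) * sqrt (2*(x - 1 + (x - 1)*(x - x + 1))/(1-1/100)^2 + 1) \<le> 2.1 * sqrt x"
proof -
  have Q0: "0 \<le> 2*(x - 1 + (x - 1)*(x - x + 1))/(1-1/100)^2 + 1" using x by simp
  have "((1+2*(1/100)) * sqrt (2*(x - 1 + (x - 1)*(x - x + 1))/(1-1/100)^2 + 1))^2
      = (1+2*(1/100))^2 * (2*(x - 1 + (x - 1)*(x - x + 1))/(1-1/100)^2 + 1)"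
    by (rule sq_sqrt[OF Q0])
  also have "\<dots> \<le> (2.1 * sqrt x)^2"
    using x by (simp add: power_mult_distrib field_simps)
  finally show ?thesis
    by (rule power2_le_imp_le) (use x in simp)
qed

lemma const_gen:
  fixes r d lo :: real
  assumes r: "r \<ge> 1" and d: "d \<ge> 1" and lo: "0 < lo" "lo \<le> 1"
  shows "(1+2*(lo/100)) * sqrt (2*((r + d) - 1 + (r - 1)*((r + d) - r + 1))/(lo - lo/100)^2 + 1)
         \<le> 2.1 * sqrt r * (1 + 3 * r * ((r + d) - r)) / lo"
proof -
  define B where "B = (r + d) - 1 + (r - 1)*((r + d) - r + 1)"
  have B: "B = r*d + 2*r - 2" unfolding B_def by (simp add: algebra_simps)
  have B0: "B \<ge> 0" unfolding B using r d by (smt (verit) mult_mono mult_nonneg_nonneg)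
  have Q0: "0 \<le> 2*B/(lo - lo/100)^2 + 1" using B0 by simp
  have a: "(1+2*(lo/100))^2 \<le> (102/100)^2" using lo by (intro power_mono) auto
  have "2*B/(lo - lo/100)^2 = (2*B/(99/100)^2)/lo^2"
    by (simp add: power2_eq_square field_simps)
  then have b: "(2*B/(lo - lo/100)^2 + 1) * lo^2 = 2*B/(99/100)^2 + lo^2"
    using lo by (simp add: field_simps)
  have lo2: "lo^2 \<le> 1" using lo by (simp add: power_le_one)
  have "((1+2*(lo/100)) * sqrt (2*B/(lo - lo/100)^2 + 1))^2 * lo^2
      = (1+2*(lo/100))^2 * ((2*B/(lo - lo/100)^2 + 1) * lo^2)"
    using sq_sqrt[OF Q0] by (simp only: mult.assoc)
  also have "\<dots> = (1+2*(lo/100))^2 * (2*B/(99/100)^2 + lo^2)" using b by simp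
  also have "\<dots> \<le> (102/100)^2 * (2*B/(99/100)^2 + 1)"
    using a lo2 B0 by (intro mult_mono add_left_mono) auto
  also have "\<dots> \<le> 4.41 * r * (1 + 6*r*d)"
  proof -
    have h2: "r*d \<ge> 0" using r d by simp
    have "r*d*1 \<le> r*d*r" using h2 r by (intro mult_left_mono) auto
    then have h1: "r*d \<le> r*d*r" by simp
    have e1: "(102/100)^2 * (2*B/(99/100)^2 + 1) = (20808/9801)*(r*d) + (41616/9801)*r - (41616/9801) + 10404/10000"
      unfolding B by (simp add: power2_eq_square field_simps)
    have e2: "4.41*r*(1+6*r*d) = (441/100)*r + (2646/100)*(r*d*r)" by (simp add: algebra_simps)
    show ?thesis unfolding e1 e2 using h1 h2 r by linarith
  qed
  also have "\<dots> \<le> 4.41 * r * (1 + 3*r*d)^2"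
    using r d by (intro mult_left_mono) (auto simp: power2_eq_square algebra_simps)
  also have "\<dots> = (2.1 * sqrt r * (1 + 3 * r * ((r + d) - r)))^2"
    using r by (simp add: power_mult_distrib power_divide)
  finally have "((1+2*(lo/100)) * sqrt (2*B/(lo - lo/100)^2 + 1))^2 * lo^2 \<le> (2.1 * sqrt r * (1 + 3 * r * ((r + d) - r)))^2" .
  then have "((1+2*(lo/100)) * sqrt (2*B/(lo - lo/100)^2 + 1))^2 \<le> (2.1 * sqrt r * (1 + 3 * r * ((r + d) - r)) / lo)^2"
    using lo by (simp add: power_divide field_simps)
  then show ?thesis unfolding B_def
    by (rule power2_le_imp_le) (use lo r d in simp)
qed
lemma xb_nn: "(Xb::real^'r^'n) \<in> nonneg_stiefel \<Longrightarrow> Xb$i$j \<ge> 0"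
  unfolding nonneg_stiefel_def nonneg_mats_def by auto

lemma xb_st: "(Xb::real^'r^'n) \<in> nonneg_stiefel \<Longrightarrow> Xb \<in> stiefel"
  unfolding nonneg_stiefel_def by auto

lemma xb_unit: assumes "(Xb::real^'r^'n) \<in> nonneg_stiefel" shows "(\<Sum>i\<in>UNIV. (Xb$i$j)^2) = 1"
  using xb_st[OF assms, unfolded stiefel_iff, rule_format, of j j] by (simp add: power2_eq_square)

lemma xb_disj:
  assumes "(Xb::real^'r^'n) \<in> nonneg_stiefel" "j \<noteq> l"
  shows "Xb$i$j = 0 \<or> Xb$i$l = 0"
proof -
  have "(\<Sum>i\<in>UNIV. Xb$i$j * Xb$i$l) = 0"
    using xb_st[OF assms(1), unfolded stiefel_iff] assms(2) by auto
  moreover have "\<forall>i\<in>UNIV. 0 \<le> Xb$i$j * Xb$i$l" using xb_nn[OF assms(1)] by simp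
  ultimately have "Xb$i$j * Xb$i$l = 0" by (simp add: sum_nonneg_eq_0_iff)
  then show ?thesis by simp
qed

lemma xb_col:
  assumes "(Xb::real^'r^'n) \<in> nonneg_stiefel"
  shows "\<exists>i. Xb$i$j \<noteq> 0"
proof (rule ccontr)
  assume "\<not> ?thesis"
  then have "(\<Sum>i\<in>UNIV. (Xb$i$j)^2) = 0" by simp
  with xb_unit[OF assms] show False by simp
qed

lemma xb_le1:
  assumes "(Xb::real^'r^'n) \<in> nonneg_stiefel"
  shows "Xb$i$j \<le> 1"
proof -
  have "(Xb$i$j)^2 \<le> (\<Sum>i\<in>UNIV. (Xb$i$j)^2)"
    by (rule member_le_sum) auto
  then have "(Xb$i$j)^2 \<le> 1" using xb_unit[OF assms] by simp
  then show ?thesis by (metis abs_le_D1 abs_square_le_1)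
qed

lemma xb_owner:
  assumes xs: "(Xb::real^'r^'n) \<in> nonneg_stiefel" and nz: "\<And>i. \<exists>j. Xb$i$j \<noteq> 0"
  shows "\<exists>k. (\<forall>i j. Xb$i$j \<noteq> 0 \<longleftrightarrow> k i = j) \<and> surj k"
proof -
  define k where "k i = (SOME j. Xb$i$j \<noteq> 0)" for i
  have kk: "Xb$i$(k i) \<noteq> 0" for i unfolding k_def using nz[of i] by (rule someI_ex)
  have own: "Xb$i$j \<noteq> 0 \<longleftrightarrow> k i = j" for i j
    using kk[of i] xb_disj[OF xs, of j "k i" i] by auto
  have "surj k"
  proof (rule surjI)
    fix j
    have "Xb$(SOME i. Xb$i$j \<noteq> 0)$j \<noteq> 0" using xb_col[OF xs, of j] by (rule someI_ex)
    then show "k (SOME i. Xb$i$j \<noteq> 0) = j" using own by blast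
  qed
  with own show ?thesis by blast
qed

lemma xb_square:
  assumes xs: "(Xb::real^'r^'n) \<in> nonneg_stiefel" and eq: "CARD('n) = CARD('r)"
  shows "\<exists>k. (\<forall>i j. Xb$i$j \<noteq> 0 \<longleftrightarrow> k i = j) \<and> surj k \<and> (\<forall>i. Xb$i$(k i) = 1)"
proof -
  define g where "g j = (SOME i. Xb$i$j \<noteq> 0)" for j
  have gg: "Xb$(g j)$j \<noteq> 0" for j unfolding g_def using xb_col[OF xs, of j] by (rule someI_ex)
  have "inj g"
  proof (rule injI)
    fix j l assume "g j = g l"
    then show "j = l" using gg[of j] gg[of l] xb_disj[OF xs, of j l "g l"] by auto
  qed
  then have "card (range g) = CARD('n)" using eq by (simp add: card_image)
  then have rg: "range g = UNIV" by (intro card_subset_eq) auto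
  have nz: "\<exists>j. Xb$i$j \<noteq> 0" for i
  proof -
    obtain j where "i = g j" using rg by (metis UNIV_I imageE)
    then show ?thesis using gg by blast
  qed
  obtain k where own: "\<forall>i j. Xb$i$j \<noteq> 0 \<longleftrightarrow> k i = j" and sk: "surj k"
    using xb_owner[OF xs nz] by blast
  have gk: "k (g j) = j" for j using own gg by blast
  have one: "Xb$i$(k i) = 1" for i
  proof -
    obtain j where ij: "i = g j" using rg by (metis UNIV_I imageE)
    have z: "Xb$i'$j = 0" if "i' \<noteq> i" for i'
    proof (rule ccontr)
      assume "Xb$i'$j \<noteq> 0"
      then have "k i' = j" using own by blast
      obtain j' where "i' = g j'" using rg by (metis UNIV_I imageE)
      then have "i' = g j" using gk \<open>k i' = j\<close> by metis
      then show False using that ij by simp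
    qed
    have "(\<Sum>i'\<in>UNIV. (Xb$i'$j)^2) = (\<Sum>i'\<in>UNIV. if i' = i then (Xb$i$j)^2 else 0)"
      by (intro sum.cong) (auto simp: z)
    then have "(Xb$i$j)^2 = 1" using xb_unit[OF xs, of j] by simp
    moreover have "k i = j" using gk ij by simp
    ultimately show ?thesis using xb_nn[OF xs, of i j]
      by (metis abs_of_nonneg power2_eq_1_iff abs_1 abs_neg_one one_le_power)
  qed
  show ?thesis using own sk one by blast
qed

lemma const_gen2:
  fixes r n lo :: real
  assumes r: "r \<ge> 1" and n: "n \<ge> r + 1" and lo: "0 < lo" "lo \<le> 1"
  shows "(1+2*(lo/100)) * sqrt (2*(n - 1 + (r - 1)*(n - r + 1))/(lo - lo/100)^2 + 1)
         \<le> 2.1 * sqrt r * (1 + 3 * r * (n - r)) / lo"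
  using const_gen[of r "n - r" lo] assms by simp

lemma st_normsq:
  assumes "(Y::real^'r^'n) \<in> stiefel"
  shows "(norm Y)^2 = real CARD('r)"
proof -
  have "(norm Y)^2 = (\<Sum>j\<in>UNIV. \<Sum>i\<in>UNIV. (Y$i$j)^2)"
    unfolding normsq by (rule sum.swap)
  also have "\<dots> = (\<Sum>j\<in>(UNIV::'r set). (1::real))"
    using assms[unfolded stiefel_iff] by (simp add: power2_eq_square)
  finally show ?thesis by simp
qed

lemma card1_eq: "CARD('r) = 1 \<Longrightarrow> (j::'r) = l"
  by (metis card_1_singletonE UNIV_I singletonD)

theorem proposition3p3:
  fixes Xbar :: "real^'r^'n"
  assumes "CARD('r) \<le> CARD('n)"
    and "Xbar \<in> nonneg_stiefel"
    and "CARD('n) > CARD('r) \<and> CARD('r) > 1 \<longrightarrow> no_zero_rows Xbar"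
  shows "\<exists>\<delta>>0. \<forall>X :: real^'r^'n. norm (X - Xbar) \<le> \<delta> \<longrightarrow>
           infdist X nonneg_stiefel
             \<le> (kappa Xbar + 1) * (infdist X nonneg_mats + infdist X stiefel)"
proof -
  define kk where "kk = kappa Xbar"
  have xs: "Xbar \<in> nonneg_stiefel" by (rule assms(2))
  have stne: "(stiefel::(real^'r^'n) set) \<noteq> {}" using xb_st[OF xs] by blast
  have red: "infdist X nonneg_stiefel \<le> (kk + 1) * (infdist X nonneg_mats + infdist X stiefel)"
    if k0: "kk \<ge> 0" and H: "\<And>Y. Y \<in> stiefel \<Longrightarrow> infdist X nonneg_stiefel \<le> (kk+1) * (infdist X nonneg_mats + dist X Y)"
    for X :: "real^'r^'n"
  proof -
    have "infdist X nonneg_stiefel / (kk+1) - infdist X nonneg_mats \<le> infdist X stiefel"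
    proof (rule infdist_ge[OF stne])
      fix Y :: "real^'r^'n" assume "Y \<in> stiefel"
      from H[OF this] have "infdist X nonneg_stiefel / (kk+1) \<le> infdist X nonneg_mats + dist X Y"
        using k0 by (simp add: divide_le_eq mult.commute)
      then show "infdist X nonneg_stiefel / (kk+1) - infdist X nonneg_mats \<le> dist X Y" by simp
    qed
    then have "infdist X nonneg_stiefel / (kk+1) \<le> infdist X nonneg_mats + infdist X stiefel" by simp
    then show ?thesis using k0 by (simp add: divide_le_eq mult.commute)
  qed
  have ex: "\<exists>\<delta>>0. \<forall>X :: real^'r^'n. norm (X - Xbar) \<le> \<delta> \<longrightarrow>
           infdist X nonneg_stiefel \<le> (kk + 1) * (infdist X nonneg_mats + infdist X stiefel)"
  proof (cases "CARD('r) = 1")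
    case True
    have k1: "kk \<ge> 1" unfolding kk_def kappa_def Let_def using True by auto
    show ?thesis
    proof (intro exI[of _ "1/2"] conjI allI impI)
      show "(0::real) < 1/2" by simp
      fix X :: "real^'r^'n" assume cl: "norm (X - Xbar) \<le> 1/2"
      show "infdist X nonneg_stiefel \<le> (kk + 1) * (infdist X nonneg_mats + infdist X stiefel)"
      proof (rule red)
        show "kk \<ge> 0" using k1 by simp
        fix Y :: "real^'r^'n" assume Y: "Y \<in> stiefel"
        define Pm :: "real^'r^'n" where "Pm = (\<chi> i j. max (X$i$j) 0)"
        define p where "p = norm Pm"
        have "\<And>i j. \<bar>(Pm - Xbar)$i$j\<bar> \<le> \<bar>(X - Xbar)$i$j\<bar>"
          using xb_nn[OF xs] unfolding Pm_def by (simp add: abs_le_iff) (smt (verit))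
        then have "norm (Pm - Xbar) \<le> norm (X - Xbar)" by (rule norm_mono_entry)
        moreover have nX: "norm Xbar = 1"
          using st_normsq[OF xb_st[OF xs]] True norm_ge_zero[of Xbar] by (simp add: power2_eq_1_iff)
        moreover have "norm Xbar \<le> norm Pm + norm (Pm - Xbar)"
          using norm_triangle_ineq[of Pm "Xbar - Pm"] by (simp add: norm_minus_commute)
        ultimately have p: "p \<ge> 1/2" unfolding p_def using cl by linarith
        define Z :: "real^'r^'n" where "Z = (1/p) *\<^sub>R Pm"
        have nZ: "norm Z = 1"
        proof -
          have "p \<noteq> 0" using p by simp
          then show ?thesis unfolding Z_def p_def by simp
        qed
        have Zin: "Z \<in> nonneg_stiefel"
        proof -
          have "Z \<in> nonneg_mats" unfolding nonneg_mats_def Z_def Pm_def using p by simp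
          moreover have "Z \<in> stiefel"
            unfolding stiefel_iff
          proof (intro allI)
            fix j l :: 'r
            have jl: "l = j" by (rule card1_eq[OF True])
            have "(\<Sum>i\<in>UNIV. Z$i$j * Z$i$l) = (\<Sum>i\<in>UNIV. \<Sum>j'\<in>UNIV. (Z$i$j')^2)"
            proof -
              have U: "(UNIV::'r set) = {j}" using card1_eq[OF True, of _ j] by auto
              have "(\<Sum>j'\<in>UNIV. (Z$i$j')^2) = (Z$i$j)^2" for i by (simp add: U)
              then show ?thesis unfolding jl by (simp add: power2_eq_square)
            qed
            also have "\<dots> = 1" using nZ by (simp add: normsq[symmetric])
            finally show "(\<Sum>i\<in>UNIV. Z$i$j * Z$i$l) = (if j = l then 1 else 0)" using jl by simp
          qed
          ultimately show ?thesis unfolding nonneg_stiefel_def by simp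
        qed
        have XP: "X - Pm = - negm X" unfolding Pm_def negm_def by (simp add: vec_eq_iff) (smt (verit))
        have PZ: "norm (Pm - Z) = \<bar>p - 1\<bar>"
        proof -
          have "Pm - Z = (1 - 1/p) *\<^sub>R Pm" unfolding Z_def by (simp add: algebra_simps)
          then have "norm (Pm - Z) = \<bar>1 - 1/p\<bar> * p" unfolding p_def by simp
          also have "\<dots> = \<bar>p - 1\<bar>" using p by (simp add: abs_mult[symmetric] field_simps)
          finally show ?thesis .
        qed
        have nY: "norm Y = 1" using st_normsq[OF Y] True norm_ge_zero[of Y] by (simp add: power2_eq_1_iff)
        have "\<bar>p - 1\<bar> \<le> norm (Pm - Y)" unfolding p_def using nY norm_triangle_ineq3[of Pm Y] by simp
        also have "\<dots> \<le> norm (Pm - X) + norm (X - Y)"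
          using norm_triangle_ineq[of "Pm - X" "X - Y"] by simp
        also have "norm (Pm - X) = norm (negm X)" using XP by (metis minus_diff_eq norm_minus_cancel)
        finally have p1: "\<bar>p - 1\<bar> \<le> norm (negm X) + norm (X - Y)" .
        have "infdist X nonneg_stiefel \<le> dist X Z" by (rule infdist_le[OF Zin])
        also have "\<dots> \<le> norm (X - Pm) + norm (Pm - Z)"
          unfolding dist_norm using norm_triangle_ineq[of "X - Pm" "Pm - Z"] by simp
        also have "\<dots> \<le> 2 * norm (negm X) + norm (X - Y)" using XP PZ p1 by simp
        also have "\<dots> \<le> 2 * infdist X nonneg_mats + dist X Y"
          using negm_le_infdist[of X] by (simp add: dist_norm)
        also have "\<dots> \<le> (kk + 1) * (infdist X nonneg_mats + dist X Y)"
        proof -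
          have "0 \<le> infdist X nonneg_mats" "0 \<le> dist X Y" by (simp_all add: infdist_nonneg)
          then have "2 * (infdist X nonneg_mats + dist X Y) \<le> (kk + 1) * (infdist X nonneg_mats + dist X Y)"
            using k1 by (intro mult_right_mono) auto
          then show ?thesis using \<open>0 \<le> dist X Y\<close> by (simp only: distrib_left)
        qed
        finally show "infdist X nonneg_stiefel \<le> (kk + 1) * (infdist X nonneg_mats + dist X Y)" .
      qed
    qed
  next
    case False
    have "CARD('r) > 0" by simp
    with False have r2: "CARD('r) \<ge> 2" by linarith
    obtain k lo where own: "\<forall>i j. Xbar$i$j \<noteq> 0 \<longleftrightarrow> k i = j" and sk: "surj k"
      and lo: "\<forall>i. lo \<le> Xbar$i$(k i)" and lo0: "0 < lo" "lo \<le> 1"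
      and k0: "kk \<ge> 0" and cst: "(1+2*(lo/100)) * sqrt (2*(real CARD('n) - 1 + (real CARD('r) - 1)*(real CARD('n) - real CARD('r) + 1))/(lo - lo/100)^2 + 1) \<le> kk"
    proof (cases "CARD('n) = CARD('r)")
      case True
      obtain k where own: "\<forall>i j. Xbar$i$j \<noteq> 0 \<longleftrightarrow> k i = j" and sk: "surj k" and one: "\<forall>i. Xbar$i$(k i) = 1"
        using xb_square[OF xs True] by blast
      have kkv: "kk = 2.1 * sqrt (real CARD('n))" unfolding kk_def kappa_def Let_def using True by simp
      have n1: "real CARD('n) \<ge> 1" by (simp add: Suc_le_eq)
      have "(1+2*(1/100)) * sqrt (2*(real CARD('n) - 1 + (real CARD('r) - 1)*(real CARD('n) - real CARD('r) + 1))/(1 - 1/100)^2 + 1) \<le> kk"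
        unfolding kkv using const_eq[OF n1] True by simp
      moreover have "kk \<ge> 0" unfolding kkv by simp
      ultimately show ?thesis using that[of k 1] own sk one by simp
    next
      case False
      then have gt: "CARD('n) > CARD('r)" using assms(1) by simp
      with r2 assms(3) have "no_zero_rows Xbar" by simp
      then have nz: "\<And>i. \<exists>j. Xbar$i$j \<noteq> 0" unfolding no_zero_rows_def by blast
      obtain k where own: "\<forall>i j. Xbar$i$j \<noteq> 0 \<longleftrightarrow> k i = j" and sk: "surj k"
        using xb_owner[OF xs nz] by blast
      define E where "E = {Xbar $ i $ j | i j. Xbar $ i $ j \<noteq> 0}"
      define lo where "lo = min_nonzero_entry Xbar"
      have lo_def': "lo = Min E" unfolding lo_def E_def min_nonzero_entry_def ..
      have finE: "finite E"
      proof -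
        have "E \<subseteq> (\<lambda>(i,j). Xbar$i$j) ` UNIV" unfolding E_def by auto
        then show ?thesis by (rule finite_subset) simp
      qed
      obtain i0 where "Xbar$i0$(k i0) \<noteq> 0" using own by blast
      then have neE: "E \<noteq> {}" unfolding E_def by blast
      have "lo \<in> E" unfolding lo_def' using finE neE by (rule Min_in)
      then obtain i j where ij: "lo = Xbar$i$j" "Xbar$i$j \<noteq> 0" unfolding E_def by blast
      have lo0: "0 < lo" using ij xb_nn[OF xs, of i j] by simp
      have lo1: "lo \<le> 1" using ij xb_le1[OF xs, of i j] by simp
      have lok: "lo \<le> Xbar$i$(k i)" for i
      proof -
        have "Xbar$i$(k i) \<in> E" unfolding E_def using own by blast
        then show ?thesis unfolding lo_def' using finE by (simp add: Min_le)
      qed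
      have kkv: "kk = 2.1 * sqrt (real CARD('r)) * (1 + 3 * real CARD('r) * (real CARD('n) - real CARD('r))) / lo"
        unfolding kk_def kappa_def Let_def lo_def using False \<open>CARD('r) \<noteq> 1\<close> by simp
      have "real CARD('r) \<ge> 1" using r2 by simp
      moreover have "real CARD('n) \<ge> real CARD('r) + 1" using gt by simp
      ultimately have "(1+2*(lo/100)) * sqrt (2*(real CARD('n) - 1 + (real CARD('r) - 1)*(real CARD('n) - real CARD('r) + 1))/(lo - lo/100)^2 + 1) \<le> kk"
        unfolding kkv using const_gen2 lo0 lo1 by blast
      moreover have "kk \<ge> 0" unfolding kkv using gt lo0 by (intro divide_nonneg_pos mult_nonneg_nonneg) auto
      ultimately show ?thesis using that[of k lo] own sk lok lo0 lo1 by blast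
    qed
    define \<rho> where "\<rho> = lo/100"
    have rho: "0 < \<rho>" "\<rho> \<le> lo/2" "\<rho> \<le> 1/4" unfolding \<rho>_def using lo0 by auto
    show ?thesis
    proof (intro exI[of _ "\<rho>/2"] conjI allI impI)
      show "\<rho>/2 > 0" using rho by simp
      fix X :: "real^'r^'n" assume cl: "norm (X - Xbar) \<le> \<rho>/2"
      show "infdist X nonneg_stiefel \<le> (kk + 1) * (infdist X nonneg_mats + infdist X stiefel)"
      proof (rule red[OF k0])
        fix Y :: "real^'r^'n" assume Y: "Y \<in> stiefel"
        have a0: "0 \<le> infdist X nonneg_mats" by (rule infdist_nonneg)
        show "infdist X nonneg_stiefel \<le> (kk+1) * (infdist X nonneg_mats + dist X Y)"
        proof (cases "dist X Y \<ge> \<rho>/2")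
          case True
          have "infdist X nonneg_stiefel \<le> dist X Xbar" by (rule infdist_le[OF xs])
          also have "\<dots> \<le> dist X Y" using cl True by (simp add: dist_norm)
          also have "\<dots> \<le> (kk+1) * (infdist X nonneg_mats + dist X Y)"
          proof -
            have "1 * (0 + dist X Y) \<le> (kk+1) * (infdist X nonneg_mats + dist X Y)"
              using k0 a0 by (intro mult_mono add_right_mono) auto
            then show ?thesis by simp
          qed
          finally show ?thesis .
        next
          case False
          have "norm (Y - Xbar) \<le> norm (Y - X) + norm (X - Xbar)"
            using norm_triangle_ineq[of "Y - X" "X - Xbar"] by simp
          also have "\<dots> \<le> \<rho>" using False cl by (simp add: dist_norm norm_minus_commute)
          finally have cY: "norm (Y - Xbar) \<le> \<rho>" .
          obtain Z where Zin: "Z \<in> nonneg_stiefel" and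
            YZ: "norm (Y - Z) \<le> (1+2*\<rho>) * sqrt (2*(real CARD('n) - 1 + (real CARD('r) - 1)*(real CARD('n) - real CARD('r) + 1))/(lo-\<rho>)^2 + 1) * norm (negm Y)"
            using key[of Xbar k lo \<rho> Y] own xb_nn[OF xs] sk lo rho Y cY by blast
          have "norm (Y - Z) \<le> kk * norm (negm Y)"
            by (rule order_trans[OF YZ[unfolded \<rho>_def] mult_right_mono[OF cst norm_ge_zero]])
          also have "\<dots> \<le> kk * (infdist X nonneg_mats + dist X Y)"
            using negm_lip[of Y X] negm_le_infdist[of X] k0
            by (intro mult_left_mono) (auto simp: dist_norm)
          finally have YZ2: "norm (Y - Z) \<le> kk * (infdist X nonneg_mats + dist X Y)" .
          have "infdist X nonneg_stiefel \<le> dist X Z" by (rule infdist_le[OF Zin])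
          also have "\<dots> \<le> dist X Y + norm (Y - Z)"
            unfolding dist_norm using norm_triangle_ineq[of "X - Y" "Y - Z"] by simp
          also have "\<dots> \<le> (kk+1) * (infdist X nonneg_mats + dist X Y)"
            using YZ2 a0 by (simp add: algebra_simps)
          finally show ?thesis .
        qed
      qed
    qed
  qed
  then show ?thesis unfolding kk_def .
qed

end
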